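(* Let $(X,d)$ be a compact metric space with $\dim X=0$. Then the identity map $\mathrm{id}_X$ is topologically stable.
   Context: $\mathcal{H}(X)$ is the set of homeomorphisms; $d_{C^0}(f,g)=\sup_x d(f(x),g(x))$; $D(f,g)=\max\{d_{C^0}(f,g),d_{C^0}(f^{-1},g^{-1})\}$. $f\in\mathcal{H}(X)$ is topologically stable if for every $\epsilon>0$ there is $\delta>0$ such that every $g\in\mathcal{H}(X)$ with $D(f,g)<\delta$ admits a continuous $h:X\to X$ with $d_{C^0}(h,\mathrm{id}_X)<\epsilon$ and $h\circ g=f\circ h$. *)

theory Defs
  imports "HOL-Analysis.Analysis"
begin

text \<open>The compact metric space is a compact subset X of a metric space type.\<close>

definition homeos :: "'a::metric_space set \<Rightarrow> ('a \<Rightarrow> 'a) set" where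
  "homeos X = {f. \<exists>g. homeomorphism X X f g}"

definition dC0 :: "'a::metric_space set \<Rightarrow> ('a \<Rightarrow> 'a) \<Rightarrow> ('a \<Rightarrow> 'a) \<Rightarrow> real" where
  "dC0 X f g = (SUP x\<in>X. dist (f x) (g x))"

definition homeo_dist :: "'a::metric_space set \<Rightarrow> ('a \<Rightarrow> 'a) \<Rightarrow> ('a \<Rightarrow> 'a) \<Rightarrow> real" where
  "homeo_dist X f g = max (dC0 X f g) (dC0 X (inv_into X f) (inv_into X g))"

definition topologically_stable :: "'a::metric_space set \<Rightarrow> ('a \<Rightarrow> 'a) \<Rightarrow> bool" where
  "topologically_stable X f \<longleftrightarrow>
     (\<forall>\<epsilon>>0. \<exists>\<delta>>0. \<forall>g\<in>homeos X. homeo_dist X f g < \<delta> \<longrightarrow>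
        (\<exists>h. continuous_on X h \<and> h ` X \<subseteq> X \<and> dC0 X h id < \<epsilon> \<and>
             (\<forall>x\<in>X. h (g x) = f (h x))))"

text \<open>Lebesgue covering dimension equal to 0: X nonempty and every finite open cover
  has a finite open refinement of order at most 1 (i.e. pairwise disjoint) covering X.\<close>

definition covering_dim_zero :: "'a::metric_space set \<Rightarrow> bool" where
  "covering_dim_zero X \<longleftrightarrow> X \<noteq> {} \<and>
     (\<forall>\<U>. finite \<U> \<and> (\<forall>U\<in>\<U>. openin (top_of_set X) U) \<and> X \<subseteq> \<Union>\<U> \<longrightarrow>
        (\<exists>\<V>. finite \<V> \<and> (\<forall>V\<in>\<V>. openin (top_of_set X) V) \<and> \<Union>\<V> = X \<and>
             (\<forall>V\<in>\<V>. \<exists>U\<in>\<U>. V \<subseteq> U) \<and> pairwise disjnt \<V>))"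

end

theory Submission
  imports Defs
begin

theorem corollary1p4:
  fixes X :: "'a::metric_space set"
  assumes "compact X" and "covering_dim_zero X"
  shows "topologically_stable X id"
  unfolding topologically_stable_def
proof (intro allI impI)
  fix \<epsilon> :: real assume ep: "\<epsilon> > 0"
  have Xne: "X \<noteq> {}" using assms(2) by (simp add: covering_dim_zero_def)
  obtain D where "D \<subseteq> X" "finite D" and Dcov: "X \<subseteq> (\<Union>c\<in>D. ball c (\<epsilon>/4))"
    proof (rule compactE_image[OF assms(1), of X "\<lambda>c. ball c (\<epsilon>/4)"])
    show "X \<subseteq> (\<Union>c\<in>X. ball c (\<epsilon>/4))" using ep by auto
  qed auto
  define U where "U = (\<lambda>c. X \<inter> ball c (\<epsilon>/4)) ` D"
  have "finite U" using \<open>finite D\<close> U_def by simp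
  moreover have "\<forall>u\<in>U. openin (top_of_set X) u" unfolding U_def
    by (auto simp: openin_open)
  moreover have "X \<subseteq> \<Union>U" using Dcov U_def by auto
  ultimately obtain V where Vfin: "finite V" and Vop: "\<forall>v\<in>V. openin (top_of_set X) v"
    and VX: "\<Union>V = X" and Vref: "\<forall>v\<in>V. \<exists>u\<in>U. v \<subseteq> u" and Vdis: "pairwise disjnt V"
  proof -
    assume hyp: "finite U" "\<forall>u\<in>U. openin (top_of_set X) u" "X \<subseteq> \<Union>U"
    have "\<exists>V. finite V \<and> (\<forall>v\<in>V. openin (top_of_set X) v) \<and> \<Union>V = X \<and>
             (\<forall>v\<in>V. \<exists>u\<in>U. v \<subseteq> u) \<and> pairwise disjnt V"
      using assms(2) hyp unfolding covering_dim_zero_def by blast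
    then show thesis using that by blast
  qed
  have "\<forall>v\<in>V. \<exists>T. open T \<and> v = X \<inter> T" using Vop by (simp add: openin_open)
  then obtain Ot where Ot: "\<And>v. v \<in> V \<Longrightarrow> open (Ot v) \<and> v = X \<inter> Ot v" by metis
  have "X \<subseteq> \<Union>(Ot ` V)" using VX Ot by blast
  then obtain \<delta> where dpos: "\<delta> > 0" and dleb: "\<And>x. x \<in> X \<Longrightarrow> \<exists>G\<in>Ot ` V. ball x \<delta> \<subseteq> G"
    using Heine_Borel_lemma[OF assms(1), of "Ot ` V"] Ot by blast
  have K: "\<exists>v\<in>V. x \<in> v \<and> (\<forall>y\<in>X. dist x y < \<delta> \<longrightarrow> y \<in> v)" if xX: "x \<in> X" for x
  proof -
    obtain v where v: "v \<in> V" "ball x \<delta> \<subseteq> Ot v" using dleb[OF xX] by blast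
    have "x \<in> v" using v Ot[OF v(1)] xX dpos centre_in_ball by blast
    moreover have "\<forall>y\<in>X. dist x y < \<delta> \<longrightarrow> y \<in> v" using v Ot[OF v(1)] by auto
    ultimately show ?thesis using v by blast
  qed
  have uniq: "v = w" if "v \<in> V" "w \<in> V" "x \<in> v" "x \<in> w" for v w x
    using Vdis that unfolding pairwise_def disjnt_def by blast
  define P where "P x = (THE v. v \<in> V \<and> x \<in> v)" for x
  have P: "P x \<in> V \<and> x \<in> P x" if xX: "x \<in> X" for x
  proof -
    obtain v where "v \<in> V" "x \<in> v" using K[OF xX] by blast
    then have "P x = v" unfolding P_def using uniq by (intro the_equality) auto
    then show ?thesis using \<open>v \<in> V\<close> \<open>x \<in> v\<close> by simp
  qed
  have Peq: "P y = P x" if xyd: "x \<in> X" "y \<in> X" "dist x y < \<delta>" for x y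
  proof -
    obtain v where v: "v \<in> V" "x \<in> v" "\<forall>y\<in>X. dist x y < \<delta> \<longrightarrow> y \<in> v" using K[OF xyd(1)] by blast
    have "P x = v" using uniq P[OF xyd(1)] v by blast
    moreover have "P y = v" using uniq P[OF xyd(2)] v xyd by blast
    ultimately show ?thesis by simp
  qed
  define h where "h x = (SOME p. p \<in> P x)" for x
  have hP: "h x \<in> P x" if "x \<in> X" for x
    unfolding h_def using P[OF that] by (meson someI)
  have hX: "h x \<in> X" if "x \<in> X" for x using hP[OF that] P[OF that] VX by blast
  have hd: "dist (h x) x \<le> \<epsilon>/2" if xX: "x \<in> X" for x
  proof -
    obtain u where "u \<in> U" "P x \<subseteq> u" using Vref P[OF xX] by blast
    then obtain c where "P x \<subseteq> ball c (\<epsilon>/4)" unfolding U_def by blast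
    then have "dist c (h x) < \<epsilon>/4" "dist c x < \<epsilon>/4" using hP[OF xX] P[OF xX] by auto
    moreover have "dist (h x) x \<le> dist c (h x) + dist c x" by (rule dist_triangle3)
    ultimately show ?thesis by linarith
  qed
  show "\<exists>\<delta>>0. \<forall>g\<in>homeos X. homeo_dist X id g < \<delta> \<longrightarrow>
        (\<exists>h. continuous_on X h \<and> h ` X \<subseteq> X \<and> dC0 X h id < \<epsilon> \<and>
             (\<forall>x\<in>X. h (g x) = id (h x)))"
  proof (intro exI[of _ \<delta>] conjI ballI impI dpos)
    fix g assume g: "g \<in> homeos X" and gd: "homeo_dist X id g < \<delta>"
    then obtain g' where hom: "homeomorphism X X g g'" unfolding homeos_def by blast
    have gX: "g x \<in> X" if "x \<in> X" for x using hom that unfolding homeomorphism_def by blast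
    have "bounded X" using assms(1) by (simp add: compact_imp_bounded)
    then obtain e where e: "\<forall>x\<in>X. \<forall>y\<in>X. dist x y \<le> e" by (meson bounded_two_points)
    have bdd: "bdd_above ((\<lambda>x. dist (id x) (g x)) ` X)"
      proof (rule bdd_aboveI[of _ e])
      fix y assume "y \<in> (\<lambda>x. dist (id x) (g x)) ` X"
      then obtain x where "x \<in> X" "y = dist (id x) (g x)" by blast
      then show "y \<le> e" using e gX[OF \<open>x \<in> X\<close>] by simp
    qed
    have gdist: "dist x (g x) < \<delta>" if "x \<in> X" for x
    proof -
      have "dist (id x) (g x) \<le> dC0 X id g" unfolding dC0_def by (rule cSUP_upper[OF that bdd])
      moreover have "dC0 X id g < \<delta>" using gd unfolding homeo_dist_def by linarith
      ultimately show ?thesis by simp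
    qed
    show "\<exists>h. continuous_on X h \<and> h ` X \<subseteq> X \<and> dC0 X h id < \<epsilon> \<and>
             (\<forall>x\<in>X. h (g x) = id (h x))"
    proof (intro exI[of _ h] conjI ballI)
      show "continuous_on X h"
        unfolding continuous_on_iff
      proof (intro ballI allI impI)
        fix x e' assume "x \<in> X" "(0::real) < e'"
        show "\<exists>d>0. \<forall>x'\<in>X. dist x' x < d \<longrightarrow> dist (h x') (h x) < e'"
        proof (intro exI[of _ \<delta>] conjI ballI impI dpos)
          fix x' assume "x' \<in> X" "dist x' x < \<delta>"
          then have "dist x x' < \<delta>" by (simp add: dist_commute)
          then have "P x' = P x" using Peq[OF \<open>x \<in> X\<close> \<open>x' \<in> X\<close>] by blast
          then have "h x' = h x" unfolding h_def by simp
          then show "dist (h x') (h x) < e'" using \<open>0 < e'\<close> by simp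
        qed
      qed
      show "h ` X \<subseteq> X" using hX by auto
      have "dC0 X h id \<le> \<epsilon>/2" unfolding dC0_def
        using hd by (intro cSUP_least[OF Xne]) simp
      then show "dC0 X h id < \<epsilon>" using ep by linarith
      fix x assume "x \<in> X"
      then have "P (g x) = P x" using Peq[OF \<open>x \<in> X\<close> gX[OF \<open>x \<in> X\<close>] gdist[OF \<open>x \<in> X\<close>]] by simp
      then show "h (g x) = id (h x)" unfolding h_def by simp
    qed
  qed
qed

end
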